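(* For every $i\ge0$, the generating function $g_i(z)=\sum_{n\ge0}b_{n,i}z^n$ of reversed partial ternary paths ending at level $i$ ($b_{n,i}$ the number of such paths of length $n$, no upper height bound) is $$g_i(z)=\frac{(-1)^i z^{2i}}{(1-t)^{i+1}}\sum_{0\le k\le i/2}(-1)^k\binom{i-k}{k}\frac{1}{t^k(t-1)^{i-k}},$$ equivalently $$g_i(z)=\frac{(-1)^iz^{2i}}{(1-t)^{i+1}(3t-4)}\Big[(t-2)(\mu_2^i+\mu_3^i)+(\mu_2^{i-1}+\mu_3^{i-1})\Big],$$ where $t$ is the formal power series in $x=z^3$ with $t(1-t)^2=x$, $t=x+2x^2+\cdots$, and $\mu_{2,3}=\dfrac{t\pm\sqrt{4t-3t^2}}{2t(t-1)}$. In particular $g_i(z)$ has nonzero coefficients only at powers $z^n$ with $n+i\equiv0\pmod 3$.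
   Context: A reversed partial ternary path of length $n$ is a lattice path $(0,c_0),\dots,(n,c_n)$ with $c_0=0$, steps $(1,2)$ or $(1,-1)$, and all $c_j\ge0$; it ends at level $c_n$. *)

theory Defs
  imports Complex_Main "HOL-Computational_Algebra.Formal_Laurent_Series"
begin

text \<open>Reversed partial ternary paths of length n, represented by their list of
  levels c_0, ..., c_n: c_0 = 0, each step changes the level by +2 or -1,
  and all levels are nonnegative.\<close>
definition rpt_paths :: "nat \<Rightarrow> int list set" where
  "rpt_paths n = {c. length c = Suc n \<and> c ! 0 = 0
      \<and> (\<forall>j<n. c ! Suc j - c ! j = 2 \<or> c ! Suc j - c ! j = -1)
      \<and> (\<forall>j\<le>n. 0 \<le> c ! j)}"

definition b_count :: "nat \<Rightarrow> nat \<Rightarrow> nat" where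
  "b_count n i = card {c \<in> rpt_paths n. c ! n = int i}"

definition g_gf :: "nat \<Rightarrow> real fps" where
  "g_gf i = Abs_fps (\<lambda>n. real (b_count n i))"

definition is_field_hom :: "('a::field \<Rightarrow> 'b::field) \<Rightarrow> bool" where
  "is_field_hom \<phi> \<longleftrightarrow> \<phi> 1 = 1 \<and> (\<forall>a b. \<phi> (a + b) = \<phi> a + \<phi> b)
      \<and> (\<forall>a b. \<phi> (a * b) = \<phi> a * \<phi> b)"

end

theory Submission
  imports Defs
begin

lemma rpt_nonneg: "c \<in> rpt_paths n \<Longrightarrow> j \<le> n \<Longrightarrow> 0 \<le> c ! j"
  by (simp add: rpt_paths_def)

lemma rpt_bound: "c \<in> rpt_paths n \<Longrightarrow> j \<le> n \<Longrightarrow> c ! j \<le> 2 * int j"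
proof (induction j)
  case 0 then show ?case by (simp add: rpt_paths_def)
next
  case (Suc j)
  then have "c ! Suc j - c ! j = 2 \<or> c ! Suc j - c ! j = -1" by (simp add: rpt_paths_def)
  with Suc show ?case by auto
qed

lemma finite_rpt: "finite (rpt_paths n)"
proof -
  have "rpt_paths n \<subseteq> {xs. set xs \<subseteq> {0..2*int n} \<and> length xs = Suc n}"
  proof
    fix c assume c: "c \<in> rpt_paths n"
    have "set c \<subseteq> {0..2*int n}"
    proof
      fix x assume "x \<in> set c"
      then obtain j where j: "j < length c" "x = c ! j" by (auto simp: in_set_conv_nth)
      with c have jn: "j \<le> n" by (simp add: rpt_paths_def)
      show "x \<in> {0..2*int n}" using rpt_nonneg[OF c jn] rpt_bound[OF c jn] jn j by auto
    qed
    with c show "c \<in> {xs. set xs \<subseteq> {0..2*int n} \<and> length xs = Suc n}" by (simp add: rpt_paths_def)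
  qed
  moreover have "finite {xs. set xs \<subseteq> {0..2*int n} \<and> length xs = Suc n}"
    by (rule finite_lists_length_eq) simp
  ultimately show ?thesis by (rule finite_subset)
qed

lemma A_Suc: "{c \<in> rpt_paths (Suc n). c ! Suc n = x} =
   (\<lambda>d. d @ [x]) ` {d \<in> rpt_paths n. 0 \<le> x \<and> (x - d ! n = 2 \<or> x - d ! n = -1)}"
proof
  show "{c \<in> rpt_paths (Suc n). c ! Suc n = x} \<subseteq> (\<lambda>d. d @ [x]) ` {d \<in> rpt_paths n. 0 \<le> x \<and> (x - d ! n = 2 \<or> x - d ! n = -1)}"
  proof
    fix c assume "c \<in> {c \<in> rpt_paths (Suc n). c ! Suc n = x}"
    then have c: "c \<in> rpt_paths (Suc n)" and cx: "c ! Suc n = x" by auto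
    have len: "length c = Suc (Suc n)" using c by (simp add: rpt_paths_def)
    define d where "d = take (Suc n) c"
    have cd: "c = d @ [x]" unfolding d_def using len cx
      by (metis append_take_drop_id Cons_nth_drop_Suc lessI drop_all order_refl)
    have dlen: "length d = Suc n" using len by (simp add: d_def)
    have dn: "\<And>j. j \<le> n \<Longrightarrow> d ! j = c ! j" by (simp add: d_def)
    have "d \<in> rpt_paths n" using c dlen unfolding rpt_paths_def
      by (auto simp: dn)
    moreover have "0 \<le> x \<and> (x - d ! n = 2 \<or> x - d ! n = -1)"
      using c cx dn[of n] unfolding rpt_paths_def by auto
    ultimately show "c \<in> (\<lambda>d. d @ [x]) ` {d \<in> rpt_paths n. 0 \<le> x \<and> (x - d ! n = 2 \<or> x - d ! n = -1)}"
      using cd by blast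
  qed
next
  show "(\<lambda>d. d @ [x]) ` {d \<in> rpt_paths n. 0 \<le> x \<and> (x - d ! n = 2 \<or> x - d ! n = -1)} \<subseteq> {c \<in> rpt_paths (Suc n). c ! Suc n = x}"
  proof
    fix c assume "c \<in> (\<lambda>d. d @ [x]) ` {d \<in> rpt_paths n. 0 \<le> x \<and> (x - d ! n = 2 \<or> x - d ! n = -1)}"
    then obtain d where d: "d \<in> rpt_paths n" "0 \<le> x" "x - d ! n = 2 \<or> x - d ! n = -1" and cd: "c = d @ [x]" by auto
    have dlen: "length d = Suc n" using d by (simp add: rpt_paths_def)
    have nth: "\<And>j. j \<le> Suc n \<Longrightarrow> (d @ [x]) ! j = (if j \<le> n then d ! j else x)"
      using dlen by (auto simp: nth_append)
    have "c \<in> rpt_paths (Suc n)" unfolding cd rpt_paths_def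
    proof (intro CollectI conjI allI impI)
      show "length (d @ [x]) = Suc (Suc n)" using dlen by simp
      show "(d @ [x]) ! 0 = 0" using d nth[of 0] by (simp add: rpt_paths_def)
      fix j
      { assume "j < Suc n"
        then show "(d @ [x]) ! Suc j - (d @ [x]) ! j = 2 \<or> (d @ [x]) ! Suc j - (d @ [x]) ! j = -1"
          using d nth[of j] nth[of "Suc j"] unfolding rpt_paths_def by (cases "j = n") auto }
      { assume "j \<le> Suc n"
        then show "0 \<le> (d @ [x]) ! j" using d nth[of j] unfolding rpt_paths_def by auto }
    qed
    moreover have "c ! Suc n = x" using cd nth[of "Suc n"] by simp
    ultimately show "c \<in> {c \<in> rpt_paths (Suc n). c ! Suc n = x}" by simp
  qed
qed

lemma b_count_0: "b_count 0 i = (if i = 0 then 1 else 0)"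
proof -
  have "{c \<in> rpt_paths 0. c ! 0 = int i} = (if i = 0 then {[0]} else {})"
    by (auto simp: rpt_paths_def length_Suc_conv)
  then show ?thesis by (simp add: b_count_def)
qed

lemma b_count_Suc: "b_count (Suc n) i = b_count n (Suc i) + (if 2 \<le> i then b_count n (i - 2) else 0)"
proof -
  let ?S = "{d \<in> rpt_paths n. 0 \<le> int i \<and> (int i - d ! n = 2 \<or> int i - d ! n = -1)}"
  let ?S1 = "{d \<in> rpt_paths n. d ! n = int (Suc i)}"
  let ?S2 = "{d \<in> rpt_paths n. d ! n = int i - 2}"
  have "b_count (Suc n) i = card ((\<lambda>d. d @ [int i]) ` ?S)"
    unfolding b_count_def A_Suc ..
  also have "\<dots> = card ?S" by (rule card_image) (auto simp: inj_on_def)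
  also have "?S = ?S1 \<union> ?S2" by auto
  also have "card (?S1 \<union> ?S2) = card ?S1 + card ?S2"
    by (rule card_Un_disjoint) (auto intro: finite_subset[OF _ finite_rpt])
  also have "card ?S1 = b_count n (Suc i)" by (simp add: b_count_def)
  also have "card ?S2 = (if 2 \<le> i then b_count n (i - 2) else 0)"
  proof (cases "2 \<le> i")
    case True
    then have "int i - 2 = int (i - 2)" by simp
    then show ?thesis using True by (simp add: b_count_def)
  next
    case False
    have "?S2 = {}" using False rpt_nonneg[of _ n n] by force
    then show ?thesis using False by (simp del: Collect_empty_eq)
  qed
  finally show ?thesis .
qed

lemma b_count_mod: "b_count n i \<noteq> 0 \<Longrightarrow> (n + i) mod 3 = 0"
proof (induction n arbitrary: i)
  case 0 then show ?case by (simp add: b_count_0 split: if_splits)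
next
  case (Suc n)
  then have "b_count n (Suc i) \<noteq> 0 \<or> (2 \<le> i \<and> b_count n (i - 2) \<noteq> 0)"
    by (auto simp: b_count_Suc split: if_splits)
  then show ?case
  proof
    assume "b_count n (Suc i) \<noteq> 0"
    from Suc.IH[OF this] show ?thesis by simp
  next
    assume "2 \<le> i \<and> b_count n (i - 2) \<noteq> 0"
    with Suc.IH[of "i-2"] show ?thesis by (simp add: mod_add_eq[symmetric]) presburger
  qed
qed

fun Pseq :: "'a::comm_ring_1 \<Rightarrow> nat \<Rightarrow> 'a" where
  "Pseq w 0 = 1"
| "Pseq w (Suc 0) = w^2"
| "Pseq w (Suc (Suc i)) = w^2 * Pseq w (Suc i) + w * Pseq w i"

lemma two_step_eq:
  fixes X Y :: "nat \<Rightarrow> 'a::comm_ring_1"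
  assumes "X 0 = Y 0" "X 1 = Y 1"
    "\<And>i. X (Suc (Suc i)) = p * X (Suc i) + q * X i"
    "\<And>i. Y (Suc (Suc i)) = p * Y (Suc i) + q * Y i"
  shows "X i = Y i"
proof (induction i rule: less_induct)
  case (less i)
  show ?case
  proof (cases i)
    case 0 then show ?thesis using assms by simp
  next
    case (Suc j)
    show ?thesis
    proof (cases j)
      case 0 then show ?thesis using assms Suc by simp
    next
      case (Suc k)
      then show ?thesis using less[of k] less[of "Suc k"] assms(3,4) \<open>i = Suc j\<close> by simp
    qed
  qed
qed

lemma g_coeff_eq:
  fixes G :: "nat \<Rightarrow> real fps"
  assumes rec: "\<And>i. G i = (if i = 0 then 1 else 0) + fps_X * (G (Suc i) + (if 2 \<le> i then G (i - 2) else 0))"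
  shows "g_gf i = G i"
proof -
  have "\<forall>i. fps_nth (g_gf i) n = fps_nth (G i) n" for n
  proof (induction n)
    case 0
    show ?case
    proof
      fix i
      have "fps_nth (G i) 0 = (if i = 0 then 1 else 0)" by (subst rec) simp
      then show "fps_nth (g_gf i) 0 = fps_nth (G i) 0" by (simp add: g_gf_def b_count_0)
    qed
  next
    case (Suc n)
    show ?case
    proof
      fix i
      have "fps_nth (G i) (Suc n) = fps_nth (G (Suc i)) n + (if 2 \<le> i then fps_nth (G (i - 2)) n else 0)"
        by (subst rec) simp
      then show "fps_nth (g_gf i) (Suc n) = fps_nth (G i) (Suc n)"
        using Suc.IH by (simp add: g_gf_def b_count_Suc)
    qed
  qed
  then show ?thesis by (simp add: fps_eq_iff)
qed

lemma fps_part: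
  fixes T :: "real fps"
  assumes T0: "fps_nth T 0 = 0" and Teq: "T * (1 - T) ^ 2 = fps_X"
  defines "T3 \<equiv> fps_compose T (fps_X ^ 3)"
  defines "B \<equiv> inverse (1 - T3)"
  defines "w \<equiv> fps_X * B"
  shows "T3 * (1 - T3)^2 = fps_X ^ 3" "fps_nth T3 0 = 0" "B * (1 - T3) = 1"
    "g_gf i = B * Pseq w i"
proof -
  have X30: "fps_nth (fps_X ^ 3 :: real fps) 0 = 0" by simp
  have "(T * (1 - T) ^ 2) oo fps_X ^ 3 = fps_X ^ 3"
    using Teq X30 by simp
  then show h1: "T3 * (1 - T3)^2 = fps_X ^ 3"
    unfolding T3_def using X30
    by (simp add: fps_compose_mult_distrib fps_compose_power[symmetric] fps_compose_sub_distrib)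
  show h2: "fps_nth T3 0 = 0" using T0 by (simp add: T3_def)
  show h3: "B * (1 - T3) = 1" unfolding B_def using h2 by (intro inverse_mult_eq_1) simp
  have Bw: "B = 1 + w^3"
  proof -
    have "w^3 = fps_X^3 * B^3" by (simp add: w_def power_mult_distrib)
    also have "\<dots> = T3 * (1 - T3)^2 * B^3" using h1 by simp
    also have "\<dots> = T3 * B * ((1 - T3) * B)^2" by (simp add: power_mult_distrib power2_eq_square power3_eq_cube algebra_simps power_numeral_reduce)
    also have "\<dots> = T3 * B" using h3 by (simp add: mult.commute)
    also have "\<dots> = B - 1" using h3 by (simp add: algebra_simps power_numeral_reduce)
    finally show ?thesis by simp
  qed
  have XB: "fps_X * (B * f) = w * f" for f by (simp add: w_def mult.assoc)
  show "g_gf i = B * Pseq w i"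
  proof (rule g_coeff_eq)
    fix i
    show "B * Pseq w i = (if i = 0 then 1 else 0) + fps_X * (B * Pseq w (Suc i) + (if 2 \<le> i then B * Pseq w (i - 2) else 0))"
    proof (cases i)
      case 0 then show ?thesis by (simp add: distrib_left XB, simp add: Bw power2_eq_square power3_eq_cube)
    next
      case (Suc j)
      show ?thesis
      proof (cases j)
        case 0 then show ?thesis using Suc by (simp add: distrib_left XB, simp add: Bw power2_eq_square power3_eq_cube algebra_simps power_numeral_reduce)
      next
        case (Suc k)
        then show ?thesis using \<open>i = Suc j\<close> by (simp add: distrib_left XB, simp add: Bw power2_eq_square power3_eq_cube algebra_simps power_numeral_reduce)
      qed
    qed
  qed
qed

definition Fterm :: "'a::comm_ring_1 \<Rightarrow> 'a \<Rightarrow> nat \<Rightarrow> nat \<Rightarrow> 'a" where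
  "Fterm a b i k = of_nat ((i - k) choose k) * a ^ (i - 2 * k) * b ^ k"

lemma Fterm_zero: "i < 2 * k \<Longrightarrow> Fterm a b i k = 0"
  by (simp add: Fterm_def binomial_eq_0)

lemma Fterm_rec: assumes ki: "k \<le> i" shows "Fterm a b (Suc (Suc i)) (Suc k) = a * Fterm a b (Suc i) (Suc k) + b * Fterm a b i k"
proof (cases "2 * k + 1 \<le> i")
  case True
  have e1: "Suc (Suc i) - Suc k = Suc (i - k)" using True by simp
  have e2: "Suc i - Suc k = i - k" by simp
  have e3: "Suc (Suc i) - 2 * Suc k = i - 2 * k" by simp
  have e4: "Suc i - 2 * Suc k = i - 2 * k - 1" by simp
  have e5: "i - 2 * k = Suc (i - 2 * k - 1)" using True by simp
  show ?thesis unfolding Fterm_def e1 e2 e3 e4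
    by (subst (1 2) e5, subst binomial_Suc_Suc) (simp add: algebra_simps)
next
  case False
  have e1: "Suc (Suc i) - Suc k = Suc (i - k)" using ki by simp
  have z: "(i - k) choose (Suc k) = 0" using False by (simp add: binomial_eq_0)
  show ?thesis unfolding Fterm_def e1
    by (subst binomial_Suc_Suc) (simp add: z algebra_simps)
qed

lemma Fsum_rec: "(\<Sum>k\<le>Suc (Suc i). Fterm a b (Suc (Suc i)) k)
   = a * (\<Sum>k\<le>Suc i. Fterm a b (Suc i) k) + b * (\<Sum>k\<le>i. Fterm a b i k)"
proof -
  have "(\<Sum>k\<le>Suc (Suc i). Fterm a b (Suc (Suc i)) k) = Fterm a b (Suc (Suc i)) 0 + (\<Sum>k\<le>Suc i. Fterm a b (Suc (Suc i)) (Suc k))"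
    by (rule sum.atMost_Suc_shift)
  also have "(\<Sum>k\<le>Suc i. Fterm a b (Suc (Suc i)) (Suc k)) = (\<Sum>k\<le>i. Fterm a b (Suc (Suc i)) (Suc k))"
    using Fterm_zero[of "Suc (Suc i)" "Suc (Suc i)"] by simp
  also have "\<dots> = (\<Sum>k\<le>i. a * Fterm a b (Suc i) (Suc k) + b * Fterm a b i k)"
    by (rule sum.cong) (auto intro: Fterm_rec)
  also have "\<dots> = a * (\<Sum>k\<le>i. Fterm a b (Suc i) (Suc k)) + b * (\<Sum>k\<le>i. Fterm a b i k)"
    by (simp add: sum.distrib sum_distrib_left)
  also have "a * (\<Sum>k\<le>Suc i. Fterm a b (Suc i) k) = a * Fterm a b (Suc i) 0 + a * (\<Sum>k\<le>i. Fterm a b (Suc i) (Suc k))"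
    by (subst sum.atMost_Suc_shift) (simp add: distrib_left)
  moreover have "Fterm a b (Suc (Suc i)) 0 = a * Fterm a b (Suc i) 0" by (simp add: Fterm_def)
  ultimately show ?thesis by (simp add: algebra_simps)
qed

lemma Fsum_half: "(\<Sum>k\<in>{0..i div 2}. Fterm a b i k) = (\<Sum>k\<le>i. Fterm a b i k)"
  by (rule sum.mono_neutral_left) (auto intro: Fterm_zero)

definition Sg :: "'a::comm_ring_1 \<Rightarrow> 'a \<Rightarrow> nat \<Rightarrow> 'a" where
  "Sg a b i = (\<Sum>k\<le>i. Fterm a b i k)"

lemma Sg_rec: "Sg a b (Suc (Suc i)) = a * Sg a b (Suc i) + b * Sg a b i"
  unfolding Sg_def by (rule Fsum_rec)

lemma Sg_0: "Sg a b 0 = 1" by (simp add: Sg_def Fterm_def)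
lemma Sg_1: "Sg a b 1 = a" by (simp add: Sg_def Fterm_def)

lemma Pseq_hom:
  assumes "\<And>x y. f (x * y) = f x * f y" "\<And>x y. f (x + y) = f x + f y" "f 1 = 1"
  shows "f (Pseq w i) = Pseq (f w) i"
proof (induction w i rule: Pseq.induct)
  case (1 w) then show ?case using assms by simp
next
  case (2 w) then show ?case using assms by (simp add: power2_eq_square)
next
  case (3 w i) then show ?case using assms by (simp add: power2_eq_square)
qed

lemma aux_div: "(x::'a::field) * y / (a * (b * c)) = y * (1 / b) * (x / (a * c))"
  by (simp add: divide_simps mult_ac)

lemma summand_eq:
  fixes t :: "'a::field"
  assumes k: "k \<in> {0..i div 2}"
  shows "(-1) ^ k * of_nat ((i - k) choose k) / (t ^ k * (t - 1) ^ (i - k))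
         = Fterm (1 / (t - 1)) (- (1 / (t * (t - 1)))) i k"
proof -
  have ik: "i - k = (i - 2 * k) + k" using k by auto
  have 1: "(t - 1) ^ (i - k) = (t - 1) ^ (i - 2 * k) * (t - 1) ^ k" by (subst ik) (simp add: power_add)
  have 2: "(- (1 / (t * (t - 1)))) ^ k = (-1) ^ k / (t ^ k * (t - 1) ^ k)"
    by (subst power_minus) (simp add: power_divide power_mult_distrib)
  have 3: "(1 / (t - 1)) ^ (i - 2 * k) = 1 / (t - 1) ^ (i - 2 * k)" by (simp add: power_one_over)
  show ?thesis unfolding Fterm_def 1 2 3 by (rule aux_div)
qed

lemma qu_aux: "(a::'a::field) \<noteq> 0 \<Longrightarrow> - (z^2) / a * (1 / (- a)) = (z / a)^2"
  by (simp add: field_simps power2_eq_square)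

lemma qv_aux: "(a::'a::field) \<noteq> 0 \<Longrightarrow> t \<noteq> 0 \<Longrightarrow> t * a^2 = z^3 \<Longrightarrow>
   - (z^2) / a * (- (z^2) / a) * (- (1 / (t * (- a)))) = z / a"
proof -
  assume a: "a \<noteq> 0" and t: "t \<noteq> 0" and h: "t * a^2 = z^3"
  have "- (z^2) / a * (- (z^2) / a) * (- (1 / (t * (- a)))) = z * z^3 / (t * a^3)"
    using a t by (simp add: field_simps power2_eq_square power3_eq_cube)
  also have "\<dots> = z * (t * a^2) / (t * a^3)" by (simp add: h)
  also have "\<dots> = z / a" using a t by (simp add: field_simps power2_eq_square power3_eq_cube)
  finally show ?thesis .
qed

lemma c1_aux: "(a::'a::field) \<noteq> 0 \<Longrightarrow> (-1) ^ 1 * z ^ (2 * 1) / a ^ (1 + 1) * (1 / (- a)) = 1 / a * (z / a)^2"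
  by (simp add: field_simps power2_eq_square power3_eq_cube)

lemma R_family:
  fixes t z :: "'a::field"
  assumes t0: "t \<noteq> 0" and t1: "1 - t \<noteq> 0" and z0: "z \<noteq> 0"
    and ht: "t * (1 - t)^2 = z^3"
  shows "(-1) ^ i * z ^ (2 * i) / (1 - t) ^ (i + 1) * Sg (1 / (t - 1)) (- (1 / (t * (t - 1)))) i
         = 1 / (1 - t) * Pseq (z / (1 - t)) i"
proof -
  define u where "u = 1 / (t - 1)"
  define v where "v = - (1 / (t * (t - 1)))"
  define W where "W = z / (1 - t)"
  define q where "q = - (z^2) / (1 - t)"
  define c where "c i = (-1) ^ i * z ^ (2 * i) / (1 - t) ^ (i + 1)" for i
  have t1': "t - 1 \<noteq> 0" using t1 by (auto simp: algebra_simps)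
  have cS: "c (Suc i) = c i * q" for i
    unfolding c_def q_def using t1 by (simp add: field_simps power_add power_mult power2_eq_square)
  have tm: "t - 1 = - (1 - t)" by simp
  have qu: "q * u = W^2" unfolding q_def u_def W_def tm using qu_aux[OF t1] .
  have qv: "q * q * v = W" unfolding q_def v_def W_def tm using qv_aux[OF t1 t0 ht] .
  have "c i * Sg u v i = 1 / (1 - t) * Pseq W i"
  proof (rule two_step_eq[where p = "W^2" and q = W])
    show "c 0 * Sg u v 0 = 1 / (1 - t) * Pseq W 0" by (simp add: c_def Sg_0)
    show "c 1 * Sg u v 1 = 1 / (1 - t) * Pseq W 1"
      unfolding c_def Sg_1 u_def W_def tm using c1_aux[OF t1] by simp
    show "c (Suc (Suc i)) * Sg u v (Suc (Suc i)) = W^2 * (c (Suc i) * Sg u v (Suc i)) + W * (c i * Sg u v i)" for i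
    proof -
      have "c (Suc (Suc i)) * Sg u v (Suc (Suc i)) = (c (Suc i) * (q * u)) * Sg u v (Suc i) + (c i * (q * q * v)) * Sg u v i"
        unfolding Sg_rec cS by (simp add: algebra_simps)
      then show ?thesis unfolding qu qv by (simp add: algebra_simps)
    qed
    show "1 / (1 - t) * Pseq W (Suc (Suc i)) = W^2 * (1 / (1 - t) * Pseq W (Suc i)) + W * (1 / (1 - t) * Pseq W i)" for i
      by (simp add: algebra_simps)
  qed
  then show ?thesis unfolding c_def u_def v_def W_def .
qed

lemma auxK: "(a::'a::field) \<noteq> 0 \<Longrightarrow> b \<noteq> 0 \<Longrightarrow> 1 / (a * b) * x * (b / (- a)) = x * (1 / (- a)) / a"
  by (simp add: field_simps)

lemma T_family:
  fixes t z s :: "'a::field"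
  assumes t0: "t \<noteq> 0" and t1: "1 - t \<noteq> 0" and z0: "z \<noteq> 0"
    and ht: "t * (1 - t)^2 = z^3" and two: "(2::'a) \<noteq> 0" and d: "3 * t - 4 \<noteq> 0"
    and hs: "s^2 = 4 * t - 3 * t^2"
  shows "(let m2 = (t + s) / (2 * t * (t - 1)); m3 = (t - s) / (2 * t * (t - 1)) in
          (-1) ^ i * z ^ (2 * i) / ((1 - t) ^ (i + 1) * (3 * t - 4))
            * ((t - 2) * (m2 ^ i + m3 ^ i) + (m2 powi (int i - 1) + m3 powi (int i - 1))))
         = 1 / (1 - t) * Pseq (z / (1 - t)) i"
proof -
  define m2 where "m2 = (t + s) / (2 * t * (t - 1))"
  define m3 where "m3 = (t - s) / (2 * t * (t - 1))"
  have tm: "t - 1 = - (1 - t)" by simp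
  have t1': "t - 1 \<noteq> 0" using t1 by auto
  define a where "a = t - 1"
  have a0: "a \<noteq> 0" using t1' by (simp add: a_def)
  have ta: "t - 1 = a" by (simp add: a_def)
  have four: "(4::'a) \<noteq> 0" using two by (metis mult_eq_0_iff numeral_Bit0 one_add_one mult_2)
  define D where "D = 2 * t * a"
  have D0: "D \<noteq> 0" using two t0 a0 by (simp add: D_def)
  have m2D: "m2 = (t + s) / D" and m3D: "m3 = (t - s) / D" unfolding m2_def m3_def D_def ta by simp_all
  have e1: "m2 + m3 = 1 / (t - 1)"
  proof -
    have "m2 + m3 = (2 * t) / D" unfolding m2D m3D by (simp add: add_divide_distrib[symmetric])
    also have "\<dots> = 1 / a" unfolding D_def using two t0 a0 by simp
    finally show ?thesis by (simp add: ta)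
  qed
  have e2: "m2 * m3 = 1 / (t * (t - 1))"
  proof -
    have "m2 * m3 = ((t + s) * (t - s)) / (D * D)" unfolding m2D m3D by simp
    also have "(t + s) * (t - s) = 4 * t * a" unfolding a_def using hs by (simp add: algebra_simps power2_eq_square)
    also have "4 * t * a / (D * D) = 1 / (t * a)" unfolding D_def using two t0 a0 four by (simp add: field_simps)
    finally show ?thesis by (simp add: ta)
  qed
  have m20: "m2 \<noteq> 0" and m30: "m3 \<noteq> 0" using e2 t0 t1' by auto
  define Q where "Q i = (t - 2) * (m2 ^ i + m3 ^ i) + (m2 ^ i / m2 + m3 ^ i / m3)" for i
  have pw: "m powi (int i - 1) = m ^ i / m" if "m \<noteq> 0" for m :: 'a and i :: nat
    using that by (simp add: power_int_diff)
  have Qrec: "Q (Suc (Suc i)) = (m2 + m3) * Q (Suc i) - (m2 * m3) * Q i" for i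
  proof -
    have a: "m2 ^ Suc (Suc i) = (m2 + m3) * m2 ^ Suc i - m2 * m3 * m2 ^ i"
      by (simp add: algebra_simps)
    have b: "m3 ^ Suc (Suc i) = (m2 + m3) * m3 ^ Suc i - m2 * m3 * m3 ^ i"
      by (simp add: algebra_simps)
    show ?thesis unfolding Q_def a b using m20 m30 by (simp add: field_simps)
  qed
  define q where "q = - (z^2) / (1 - t)"
  define K where "K = 1 / ((1 - t) * (3 * t - 4))"
  define W where "W = z / (1 - t)"
  have Yform: "(-1) ^ i * z ^ (2 * i) / ((1 - t) ^ (i + 1) * (3 * t - 4))
            * ((t - 2) * (m2 ^ i + m3 ^ i) + (m2 powi (int i - 1) + m3 powi (int i - 1)))
        = K * q ^ i * Q i" for i
  proof -
    have "q ^ i = (-1) ^ i * z ^ (2 * i) / (1 - t) ^ i" unfolding q_def power_divide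
      by (subst power_minus) (simp add: power_mult)
    moreover have "m2 powi (int i - 1) + m3 powi (int i - 1) = m2 ^ i / m2 + m3 ^ i / m3"
      using pw[OF m20, of i] pw[OF m30, of i] by simp
    moreover have "(1 - t) ^ (i + 1) * (3 * t - 4) = (1 - t) ^ i * ((1 - t) * (3 * t - 4))" by simp
    ultimately show ?thesis unfolding K_def Q_def by simp
  qed
  have qu: "q * (m2 + m3) = W^2" unfolding e1 q_def W_def tm using qu_aux[OF t1] .
  have qv: "q * q * (- (m2 * m3)) = W" unfolding e2 q_def W_def tm using qv_aux[OF t1 t0 ht] by simp
  have "K * q ^ i * Q i = 1 / (1 - t) * Pseq W i"
  proof (rule two_step_eq[where p = "W^2" and q = W])
    have inv: "1 / m2 + 1 / m3 = t"
    proof -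
      have "1 / m2 + 1 / m3 = (m2 + m3) / (m2 * m3)" using m20 m30 by (simp add: field_simps)
      also have "\<dots> = t" unfolding e1 e2 using t0 t1' by (simp add: field_simps)
      finally show ?thesis .
    qed
    have Q0: "Q 0 = 3 * t - 4" unfolding Q_def using inv by (simp add: algebra_simps)
    show "K * q ^ 0 * Q 0 = 1 / (1 - t) * Pseq W 0" unfolding Q0 K_def using d t1 by simp
    have Q1: "Q 1 = (3 * t - 4) / (t - 1)" unfolding Q_def using m20 m30 t1' e1
      by (simp add: field_simps)
    show "K * q ^ 1 * Q 1 = 1 / (1 - t) * Pseq W 1"
    proof -
      have "K * q ^ 1 * Q 1 = 1 / ((1 - t) * (3 * t - 4)) * (- (z^2) / (1 - t)) * ((3 * t - 4) / (- (1 - t)))"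
        unfolding K_def Q1 q_def tm by simp
      also have "\<dots> = - (z^2) / (1 - t) * (1 / (- (1 - t))) / (1 - t)"
        by (rule auxK[OF t1 d])
      also have "\<dots> = 1 / (1 - t) * W^2" unfolding W_def using qu_aux[OF t1, of z]
        by (simp add: field_simps)
      finally show ?thesis by simp
    qed
    show "K * q ^ Suc (Suc i) * Q (Suc (Suc i)) = W^2 * (K * q ^ Suc i * Q (Suc i)) + W * (K * q ^ i * Q i)" for i
    proof -
      have "K * q ^ Suc (Suc i) * Q (Suc (Suc i)) = (q * (m2 + m3)) * (K * q ^ Suc i * Q (Suc i)) + (q * q * (- (m2 * m3))) * (K * q ^ i * Q i)"
        unfolding Qrec by (simp add: algebra_simps)
      then show ?thesis unfolding qu qv .
    qed
    show "1 / (1 - t) * Pseq W (Suc (Suc i)) = W^2 * (1 / (1 - t) * Pseq W (Suc i)) + W * (1 / (1 - t) * Pseq W i)" for i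
      by (simp add: algebra_simps)
  qed
  then show ?thesis unfolding Let_def m2_def[symmetric] m3_def[symmetric] Yform W_def .
qed

lemma hom_facts:
  fixes \<phi> :: "'a::field \<Rightarrow> 'b::field"
  assumes h: "is_field_hom \<phi>"
  shows hom_one: "\<phi> 1 = 1" and hom_add: "\<phi> (a + b) = \<phi> a + \<phi> b" and hom_mult: "\<phi> (a * b) = \<phi> a * \<phi> b"
    and hom_zero: "\<phi> 0 = 0" and hom_uminus: "\<phi> (- a) = - \<phi> a" and hom_diff: "\<phi> (a - b) = \<phi> a - \<phi> b"
    and hom_power: "\<phi> (a ^ n) = \<phi> a ^ n" and hom_of_nat: "\<phi> (of_nat n) = of_nat n"
    and hom_numeral: "\<phi> (numeral m) = numeral m"
    and hom_inverse: "\<phi> (inverse a) = inverse (\<phi> a)" and hom_divide: "\<phi> (a / b) = \<phi> a / \<phi> b"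
    and hom_nz: "a \<noteq> 0 \<Longrightarrow> \<phi> a \<noteq> 0"
proof -
  show h1: "\<phi> 1 = 1" and ha: "\<phi> (a + b) = \<phi> a + \<phi> b" and hm: "\<phi> (a * b) = \<phi> a * \<phi> b" for a b
    using h by (auto simp: is_field_hom_def)
  show h0: "\<phi> 0 = 0" using ha[of 0 0] by (metis add.right_neutral add_left_cancel)
  show hu: "\<phi> (- a) = - \<phi> a" for a using minus_unique[of "\<phi> a" "\<phi> (-a)"] ha[of a "-a"] h0 by simp
  show "\<phi> (a - b) = \<phi> a - \<phi> b" using ha[of a "-b"] hu[of b] by simp
  show "\<phi> (a ^ n) = \<phi> a ^ n" by (induction n) (simp_all add: h1 hm)
  have hn: "\<phi> (of_nat n) = of_nat n" for n by (induction n) (simp_all add: h1 ha h0)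
  then show "\<phi> (of_nat n) = of_nat n" .
  show "\<phi> (numeral m) = numeral m" using hn[of "numeral m"] by simp
  have hi: "\<phi> (inverse a) = inverse (\<phi> a)" for a
  proof (cases "a = 0")
    case True then show ?thesis by (simp add: h0)
  next
    case False
    then have "\<phi> a * \<phi> (inverse a) = 1" using hm[of a "inverse a"] h1 by simp
    then show ?thesis by (simp add: inverse_unique)
  qed
  then show "\<phi> (inverse a) = inverse (\<phi> a)" .
  show "\<phi> (a / b) = \<phi> a / \<phi> b" by (simp add: divide_inverse hm hi)
  show "a \<noteq> 0 \<Longrightarrow> \<phi> a \<noteq> 0"
  proof
    assume "a \<noteq> 0" "\<phi> a = 0"
    then have "\<phi> a * \<phi> (inverse a) = 0" by simp
    then have "\<phi> (a * inverse a) = 0" using hm by metis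
    then show False using \<open>a \<noteq> 0\<close> h1 by simp
  qed
qed

theorem mainTheorem7:
  fixes T :: "real fps" and i :: nat
  assumes T0: "fps_nth T 0 = 0"
    and Teq: "T * (1 - T) ^ 2 = fps_X"
  shows "(let t = fps_to_fls (fps_compose T (fps_X ^ 3)); z = (fls_X :: real fls) in
           fps_to_fls (g_gf i)
             = (-1) ^ i * z ^ (2 * i) / (1 - t) ^ (i + 1)
               * (\<Sum>k\<in>{0..i div 2}. (-1) ^ k * of_nat ((i - k) choose k)
                                     / (t ^ k * (t - 1) ^ (i - k)))
         \<and> (\<forall>(\<phi> :: real fls \<Rightarrow> 'b::field) s.
              is_field_hom \<phi> \<and> s ^ 2 = \<phi> (4 * t - 3 * t ^ 2) \<longrightarrow>
              (let t' = \<phi> t;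
                   m2 = (t' + s) / (2 * t' * (t' - 1));
                   m3 = (t' - s) / (2 * t' * (t' - 1)) in
               \<phi> (fps_to_fls (g_gf i))
                 = (-1) ^ i * \<phi> z ^ (2 * i) / ((1 - t') ^ (i + 1) * (3 * t' - 4))
                   * ((t' - 2) * (m2 ^ i + m3 ^ i)
                      + (m2 powi (int i - 1) + m3 powi (int i - 1))))))
         \<and> (\<forall>n. fps_nth (g_gf i) n \<noteq> 0 \<longrightarrow> (n + i) mod 3 = 0)"
proof -
  define T3 where "T3 = fps_compose T (fps_X ^ 3)"
  define B where "B = inverse (1 - T3)"
  define w where "w = fps_X * B"
  note fp = fps_part[OF T0 Teq, folded T3_def, folded B_def, folded w_def]
  define t where "t = fps_to_fls T3"
  define z where "z = (fls_X :: real fls)"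
  have ht: "t * (1 - t)^2 = z^3"
  proof -
    have "fps_to_fls (T3 * (1 - T3)^2) = fps_to_fls (fps_X ^ 3)" using fp(1) by simp
    then show ?thesis unfolding t_def z_def by (simp add: fls_times_fps_to_fls fps_to_fls_power)
  qed
  have z0: "z \<noteq> 0" unfolding z_def by simp
  have t0: "t \<noteq> 0" using ht z0 by auto
  have t1: "1 - t \<noteq> 0"
  proof -
    have "1 - t = fps_to_fls (1 - T3)" unfolding t_def by simp
    moreover have "(1 - T3) $ 0 \<noteq> 0" using fp(2) by simp
    then have "1 - T3 \<noteq> 0" by (metis fps_zero_nth)
    ultimately show ?thesis by simp
  qed
  have d: "3 * t - 4 \<noteq> 0"
  proof -
    have "3 * t - 4 = fps_to_fls (3 * T3 - 4)" unfolding t_def by (simp add: fls_times_fps_to_fls)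
    moreover have "(3 * T3 - 4) $ 0 \<noteq> 0" using fp(2) by (simp add: numeral_fps_const)
    then have "3 * T3 - 4 \<noteq> 0" by (metis fps_zero_nth)
    ultimately show ?thesis by (metis fps_to_fls_eq_0_iff)
  qed
  have Bl: "fps_to_fls B = 1 / (1 - t)"
  proof -
    have "fps_to_fls B * (1 - t) = 1" using arg_cong[OF fp(3), of fps_to_fls] unfolding t_def
      by (simp add: fls_times_fps_to_fls)
    then show ?thesis using t1 by (simp add: field_simps)
  qed
  have wl: "fps_to_fls w = z / (1 - t)" unfolding w_def using Bl by (simp add: fls_times_fps_to_fls z_def)
  have Pl: "fps_to_fls (Pseq w i) = Pseq (fps_to_fls w) i"
    by (rule Pseq_hom) (simp_all add: fls_times_fps_to_fls)
  have gl: "fps_to_fls (g_gf i) = 1 / (1 - t) * Pseq (z / (1 - t)) i"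
    using fp(4)[of i] Pl wl Bl by (simp add: fls_times_fps_to_fls)
  have sumeq: "(\<Sum>k\<in>{0..i div 2}. (-1) ^ k * of_nat ((i - k) choose k) / (t ^ k * (t - 1) ^ (i - k)))
      = Sg (1 / (t - 1)) (- (1 / (t * (t - 1)))) i"
    unfolding Sg_def Fsum_half[symmetric] by (rule sum.cong) (auto intro: summand_eq)
  have part1: "fps_to_fls (g_gf i) = (-1) ^ i * z ^ (2 * i) / (1 - t) ^ (i + 1)
               * (\<Sum>k\<in>{0..i div 2}. (-1) ^ k * of_nat ((i - k) choose k) / (t ^ k * (t - 1) ^ (i - k)))"
    unfolding sumeq gl R_family[OF t0 t1 z0 ht] ..
  have part2: "\<phi> (fps_to_fls (g_gf i))
                 = (-1) ^ i * \<phi> z ^ (2 * i) / ((1 - \<phi> t) ^ (i + 1) * (3 * \<phi> t - 4))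
                   * ((\<phi> t - 2) * (((\<phi> t + s) / (2 * \<phi> t * (\<phi> t - 1))) ^ i + ((\<phi> t - s) / (2 * \<phi> t * (\<phi> t - 1))) ^ i)
                      + (((\<phi> t + s) / (2 * \<phi> t * (\<phi> t - 1))) powi (int i - 1) + ((\<phi> t - s) / (2 * \<phi> t * (\<phi> t - 1))) powi (int i - 1)))"
    if h: "is_field_hom (\<phi> :: real fls \<Rightarrow> 'b::field)" and hs: "s ^ 2 = \<phi> (4 * t - 3 * t ^ 2)" for \<phi> s
  proof -
    note hf = hom_facts[OF h]
    have eq1: "\<phi> (fps_to_fls (g_gf i)) = 1 / (1 - \<phi> t) * Pseq (\<phi> z / (1 - \<phi> t)) i"
      unfolding gl hf(3) Pseq_hom[of \<phi>, OF hf(3) hf(2) hf(1)] by (simp add: hf)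
    have p1: "\<phi> t \<noteq> 0" using hf(12)[OF t0] .
    have p2: "1 - \<phi> t \<noteq> 0" using hf(12)[OF t1] by (simp add: hf)
    have p3: "\<phi> z \<noteq> 0" using hf(12)[OF z0] .
    have p4: "\<phi> t * (1 - \<phi> t)^2 = \<phi> z ^ 3" using arg_cong[OF ht, of \<phi>] by (simp add: hf)
    have p5: "(2::'b) \<noteq> 0" using hf(12)[of 2] by (simp add: hf)
    have p6: "3 * \<phi> t - 4 \<noteq> 0" using hf(12)[OF d] by (simp add: hf)
    have p7: "s^2 = 4 * \<phi> t - 3 * \<phi> t ^ 2" using hs by (simp add: hf)
    note eq2 = T_family[unfolded Let_def, OF p1 p2 p3 p4 p5 p6 p7, of i]
    show ?thesis by (rule trans[OF eq1 eq2[symmetric]])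
  qed
  have part3: "\<forall>n. fps_nth (g_gf i) n \<noteq> 0 \<longrightarrow> (n + i) mod 3 = 0"
    by (simp add: g_gf_def b_count_mod)
  show ?thesis unfolding Let_def t_def[symmetric] T3_def[symmetric] z_def[symmetric]
    using part1 part2 part3 by blast
qed

end
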